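(* Let $K\ge2$, let $\mathbf{W}$ be a $K\times K$ invertible row-stochastic matrix, let $\mathbf{p}$ be a probability vector with all entries positive, and let $i\ne j$ in $[K]$. Let $\boldsymbol{\Pi}_{\{i,j\}}$ be the permutation matrix that swaps the $i$-th and $j$-th entries. Then the function $$[0,1]\to\mathbb{R}_+,\qquad \lambda\mapsto\alpha_{f\text{-DIV}}\big(\lambda\mathbf{p}+(1-\lambda)\mathbf{p}\boldsymbol{\Pi}_{\{i,j\}},\mathbf{W}\big)$$ is convex.
   Context: $\boldsymbol{\Phi}(\mathbf{W})=\mathbf{W}(\mathbf{W}^{-1}\odot\mathbf{W}^{-1})$ with $\odot$ the entrywise product. For a probability vector $\mathbf{p}$ with positive entries, $\alpha_{f\text{-DIV}}(\mathbf{p},\mathbf{W})=\frac{\mathbf{p}\boldsymbol{\Phi}(\mathbf{W})\mathbf{p}^{-\top}-1}{K-1}=\frac{1}{K-1}\Big(\sum_{k,\ell}\frac{p_k}{p_\ell}\Phi_{k,\ell}(\mathbf{W})-1\Big)$, where $\mathbf{p}^{-\top}$ is the column vector of entrywise reciprocals of $\mathbf{p}$ (this is the paper's closed form for the limiting normalized $f$-divergence loss). *)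

theory Defs
  imports "HOL-Analysis.Analysis"
begin

definition row_stochastic :: "real^'n^'n \<Rightarrow> bool" where
  "row_stochastic W \<longleftrightarrow> (\<forall>k l. W $ k $ l \<ge> 0) \<and> (\<forall>k. (\<Sum>l\<in>UNIV. W $ k $ l) = 1)"

definition pos_prob_vector :: "real^'n \<Rightarrow> bool" where
  "pos_prob_vector p \<longleftrightarrow> (\<forall>k. p $ k > 0) \<and> (\<Sum>k\<in>UNIV. p $ k) = 1"

definition Phi :: "real^'n^'n \<Rightarrow> real^'n^'n" where
  "Phi W = W ** (\<chi> k l. (matrix_inv W) $ k $ l * (matrix_inv W) $ k $ l)"

text \<open>alpha_{f-DIV}(p,W) = (p Phi(W) p^{-T} - 1)/(K-1).\<close>
definition alpha_fdiv :: "real^'n \<Rightarrow> real^'n^'n \<Rightarrow> real" where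
  "alpha_fdiv p W =
     ((\<Sum>k\<in>UNIV. \<Sum>l\<in>UNIV. (p $ k / p $ l) * Phi W $ k $ l) - 1) / (real CARD('n) - 1)"

definition swap_perm_matrix :: "'n \<Rightarrow> 'n \<Rightarrow> real^'n^'n" where
  "swap_perm_matrix i j = (\<chi> r c. if (r = i \<and> c = j) \<or> (r = j \<and> c = i) \<or> (r = c \<and> r \<noteq> i \<and> r \<noteq> j)
                                  then 1 else 0)"

end

theory Submission
  imports Defs
begin

lemma convex_on_sum_fun:
  fixes f :: "'i \<Rightarrow> real \<Rightarrow> real"
  assumes "finite I" "\<And>i. i \<in> I \<Longrightarrow> convex_on S (f i)" "convex S"
  shows "convex_on S (\<lambda>x. \<Sum>i\<in>I. f i x)"
  using assms
proof (induction I rule: finite_induct)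
  case empty
  then show ?case by (simp add: convex_on_const)
next
  case (insert a F)
  then have "convex_on S (\<lambda>x. f a x + (\<Sum>i\<in>F. f i x))"
    by (intro convex_on_add) auto
  then show ?case using insert by simp
qed

lemma convex_on_cong':
  assumes "convex_on S f" "\<And>x. x \<in> S \<Longrightarrow> f x = g x"
  shows "convex_on S g"
  using assms unfolding convex_on_def convex_def by (metis (no_types, lifting))

lemma t1: fixes u w x :: real assumes u: "u > 0" and uw: "u + w > 0" and that: "x \<in> {0..1}"
  shows "(1-x)*u > 0 \<or> x*(u+w) > 0"
proof (cases "x = 0")
  case True then show ?thesis using u by simp
next
  case False then have "x > 0" using that by auto
  then show ?thesis using uw by simp
qed

lemma t2: fixes u w x y a b :: real assumes "a + b = 1"
  shows "u + w * (a *\<^sub>R x + b *\<^sub>R y) = a *\<^sub>R (u+w * x) + b *\<^sub>R (u+w * y)"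
proof -
  have "u = a * u + b * u" using assms by (metis distrib_right mult_1)
  then show ?thesis by (simp add: algebra_simps)
qed
lemma t3: "convex_on {0..1} (\<lambda>x::real. A + B*x)"
  unfolding convex_on_def
proof (intro conjI ballI allI impI)
  fix x y a b :: real assume "a + b = 1"
  then have "A = a * A + b * A" by (metis distrib_right mult_1)
  then show "A + B * (a *\<^sub>R x + b *\<^sub>R y) \<le> a * (A + B * x) + b * (A + B * y)"
    by (simp add: algebra_simps)
qed simp

lemma key_convex:
  fixes A B c u w :: real
  assumes c: "c \<ge> 0" and u: "u > 0" and uv: "u + w > 0"
  shows "convex_on {0..1} (\<lambda>x. A + B*x + c/(u+w * x))"
proof -
  have pos: "u + w * x > 0" if "x \<in> {0..1}" for x
  proof -
    have "u + w * x = (1-x)*u + x*(u+w)" by (simp add: algebra_simps)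
    moreover have "(1-x)*u \<ge> 0" "x*(u+w) \<ge> 0" using that u uv by auto
    moreover have "(1-x)*u > 0 \<or> x*(u+w) > 0" using t1[OF u uv that] .
    ultimately show ?thesis by linarith
  qed
  have inv: "convex_on {0<..} (inverse :: real \<Rightarrow> real)"
    by (rule convex_on_inverse) auto
  have h: "convex_on {0..1} (\<lambda>x. inverse (u+w * x))"
    unfolding convex_on_def
  proof (intro conjI ballI allI impI)
    show "convex {0..1::real}" by simp
    fix x y :: real and a b :: real
    assume xy: "x \<in> {0..1}" "y \<in> {0..1}" and ab: "0 \<le> a" "0 \<le> b" "a + b = 1"
    have e: "u + w * (a *\<^sub>R x + b *\<^sub>R y) = a *\<^sub>R (u+w * x) + b *\<^sub>R (u+w * y)"
      using t2[OF ab(3)] .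
    show "inverse (u + w * (a *\<^sub>R x + b *\<^sub>R y)) \<le> a * inverse (u + w * x) + b * inverse (u + w * y)"
      unfolding e using inv pos[OF xy(1)] pos[OF xy(2)] ab unfolding convex_on_def by auto
  qed
  have "convex_on {0..1} (\<lambda>x. (A + B*x) + c * inverse (u+w * x))"
  proof (rule convex_on_add)
    show "convex_on {0..1} (\<lambda>x. A + B*x)"
      by (rule t3)
    show "convex_on {0..1} (\<lambda>x. c * inverse (u+w * x))"
      using c h by (rule convex_on_cmul)
  qed
  then show ?thesis by (simp add: divide_inverse)
qed

definition sw :: "'n \<Rightarrow> 'n \<Rightarrow> 'n \<Rightarrow> 'n" where
  "sw i j k = (if k = i then j else if k = j then i else k)"

lemma swap_coord:
  fixes p :: "real^'n::finite" and i j :: 'n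
  shows "(p v* swap_perm_matrix i j) $ k = p $ (sw i j k)"
proof -
  have "(p v* swap_perm_matrix i j) $ k = (\<Sum>r\<in>UNIV. if r = sw i j k then p $ r else 0)"
  proof -
    have "p $ r * (swap_perm_matrix i j $ r $ k) = (if r = sw i j k then p $ r else 0)" for r
      by (auto simp: swap_perm_matrix_def sw_def)
    then show ?thesis unfolding vector_matrix_mult_def by simp
  qed
  also have "\<dots> = p $ (sw i j k)" by simp
  finally show ?thesis .
qed

lemma Phi_nonneg:
  assumes "row_stochastic W"
  shows "Phi W $ k $ l \<ge> 0"
  using assms unfolding Phi_def row_stochastic_def matrix_matrix_mult_def
  by (auto intro!: sum_nonneg)

theorem lemma11:
  fixes W :: "real^'n::finite^'n" and p :: "real^'n" and i j :: 'n
  assumes "CARD('n) \<ge> 2"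
    and "invertible W"
    and "row_stochastic W"
    and "pos_prob_vector p"
    and "i \<noteq> j"
  shows "convex_on {0..1}
           (\<lambda>lam::real. alpha_fdiv (lam *\<^sub>R p + (1 - lam) *\<^sub>R (p v* swap_perm_matrix i j)) W)"
proof -
  define q where "q x = x *\<^sub>R p + (1 - x) *\<^sub>R (p v* swap_perm_matrix i j)" for x :: real
  have pp: "p $ k > 0" for k using assms(4) unfolding pos_prob_vector_def by auto
  have qk: "q x $ k = x * p $ k + (1 - x) * p $ (sw i j k)" for x k
    unfolding q_def by (simp add: swap_coord)
  have ratio: "convex_on {0..1} (\<lambda>x. q x $ k / q x $ l)" for k l
  proof (cases "l = i \<or> l = j")
    case False
    then have sl: "sw i j l = l" by (simp add: sw_def)
    have "convex_on {0..1} (\<lambda>x. p $ (sw i j k) / p $ l + ((p $ k - p $ (sw i j k)) / p $ l) * x + 0 / (1 + 0 * x))"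
      by (rule key_convex) auto
    then show ?thesis
      by (rule convex_on_cong') (simp add: qk sl add_divide_distrib diff_divide_distrib algebra_simps)
  next
    case True
    define u where "u = p $ (sw i j l)"
    define w where "w = p $ l - p $ (sw i j l)"
    have u: "u > 0" and uw: "u + w > 0" using pp unfolding u_def w_def by auto
    have ql: "q x $ l = u + w * x" for x unfolding qk u_def w_def by (simp add: algebra_simps)
    have qpos: "u + w * x > 0" if "x \<in> {0..1}" for x
    proof -
      have "u + w * x = (1-x)*u + x*(u+w)" by (simp add: algebra_simps)
      moreover have "(1-x)*u \<ge> 0" "x*(u+w) \<ge> 0" using that u uw by auto
      moreover have "(1-x)*u > 0 \<or> x*(u+w) > 0" using t1[OF u uw that] .
      ultimately show ?thesis by linarith
    qed
    show ?thesis
    proof (cases "k = l")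
      case True
      have "convex_on {0..1} (\<lambda>x. 1 + 0 * x + 0 / (u + w * x))"
        by (rule key_convex) (use u uw in auto)
      then show ?thesis
        by (rule convex_on_cong') (use qpos in \<open>simp add: \<open>k = l\<close> ql less_imp_neq[symmetric]\<close>)
    next
      case kl: False
      show ?thesis
      proof (cases "k = i \<or> k = j")
        case True
        then have sk: "sw i j k = l" "sw i j l = k" using \<open>l = i \<or> l = j\<close> kl assms(5)
          by (auto simp: sw_def)
        have "convex_on {0..1} (\<lambda>x. (-1) + 0 * x + (p $ k + p $ l) / (u + w * x))"
          by (rule key_convex) (use u uw pp[of k] pp[of l] in auto)
        then show ?thesis
        proof (rule convex_on_cong')
          fix x :: real assume x: "x \<in> {0..1}"
          have "q x $ k = (p $ k + p $ l) - (u + w * x)"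
            unfolding qk u_def w_def sk by (simp add: algebra_simps)
          then show "-1 + 0 * x + (p $ k + p $ l) / (u + w * x) = q x $ k / q x $ l"
            using qpos[OF x] by (simp add: ql field_simps)
        qed
      next
        case False
        then have sk: "sw i j k = k" by (simp add: sw_def)
        have "convex_on {0..1} (\<lambda>x. 0 + 0 * x + p $ k / (u + w * x))"
          by (rule key_convex) (use u uw pp[of k] in auto)
        then show ?thesis
        proof (rule convex_on_cong')
          fix x :: real
          have "q x $ k = p $ k" unfolding qk sk by (simp add: algebra_simps)
          then show "0 + 0 * x + p $ k / (u + w * x) = q x $ k / q x $ l" by (simp add: ql)
        qed
      qed
    qed
  qed
  have S: "convex_on {0..1} (\<lambda>x. \<Sum>k\<in>UNIV. \<Sum>l\<in>UNIV. (q x $ k / q x $ l) * Phi W $ k $ l)"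
  proof (rule convex_on_sum_fun, simp, rule convex_on_sum_fun, simp)
    fix k l
    have "convex_on {0..1} (\<lambda>x. Phi W $ k $ l * (q x $ k / q x $ l))"
      by (rule convex_on_cmul[OF Phi_nonneg[OF assms(3)] ratio])
    then show "convex_on {0..1} (\<lambda>x. (q x $ k / q x $ l) * Phi W $ k $ l)"
      by (simp add: mult.commute)
  qed simp_all
  have K: "real CARD('n) - 1 \<ge> 0" using assms(1) by simp
  have "convex_on {0..1} (\<lambda>x. alpha_fdiv (q x) W)"
    unfolding alpha_fdiv_def
    by (rule convex_on_cdiv[OF K], rule convex_on_diff[OF S], simp add: concave_on_const)
  then show ?thesis unfolding q_def .
qed

end
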